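(* Let $n\ge1$, let $\chi$ be an irreducible character of $S_n$, let $1\le k\le n$ and let $A,X^1,\ldots,X^k\in M_n(\mathbb{C})$. Then $$D^k d_\chi (A)(X^1,\ldots ,X^k)= \sum_{\sigma \in S_k}\sum _{\alpha, \beta \in Q_{k,n}}d_\chi \Big(X^\sigma_{\beta}[ \alpha | \beta ] \bigoplus_{\alpha | \beta}A(\alpha|\beta)\Big),$$ and in particular, for $X\in M_n(\mathbb{C})$, $$D^k d_\chi (A)(X,\ldots ,X)= k!\sum _{\alpha, \beta \in Q_{k,n}}d_\chi \Big(X [ \alpha | \beta ] \bigoplus_{\alpha |\beta}A(\alpha|\beta)\Big).$$
   Context: $d_\chi(Y)=\sum_{\sigma\in S_n}\chi(\sigma)\prod_{i=1}^n y_{i\sigma(i)}$ for $Y=(y_{ij})\in M_n(\mathbb{C})$. $D^k d_\chi(A)(X^1,\ldots,X^k)=\frac{\partial^k}{\partial t_1\cdots\partial t_k}\big|_{t_1=\cdots=t_k=0} d_\chi(A+t_1X^1+\cdots+t_kX^k)$. $Q_{k,n}$ is the set of strictly increasing maps $\{1,\ldots,k\}\to\{1,\ldots,n\}$; for $\alpha\in Q_{k,n}$, $\bar\alpha\in Q_{n-k,n}$ is the map whose image is the complement of $\operatorname{Im}\alpha$. For $\sigma\in S_k$ and $\beta\in Q_{k,n}$, $X^\sigma_\beta$ is the $n\times n$ matrix whose $\beta(p)$-th column equals the $\beta(p)$-th column of $X^{\sigma(p)}$ for $1\le p\le k$, all other columns being zero. For an $n\times n$ matrix $Y$, $Y[\alpha|\beta]$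 is the $k\times k$ matrix with $(i,j)$ entry $y_{\alpha(i)\beta(j)}$ and $Y(\alpha|\beta)$ is the $(n-k)\times(n-k)$ matrix obtained by deleting rows $\alpha(1),\ldots,\alpha(k)$ and columns $\beta(1),\ldots,\beta(k)$. For a $k\times k$ matrix $P$ and an $(n-k)\times(n-k)$ matrix $R$, $P\bigoplus_{\alpha|\beta}R=(z_{ij})$ is the $n\times n$ matrix with $z_{ij}=0$ if exactly one of $i\in\operatorname{Im}\alpha$, $j\in\operatorname{Im}\beta$ holds; $z_{ij}=p_{\alpha^{-1}(i)\beta^{-1}(j)}$ if $i\in\operatorname{Im}\alpha,\ j\in\operatorname{Im}\beta$; $z_{ij}=r_{\bar\alpha^{-1}(i)\bar\beta^{-1}(j)}$ if $i\notin\operatorname{Im}\alpha,\ j\notin\operatorname{Im}\beta$. *)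

theory Defs
  imports "HOL-Analysis.Analysis"
begin

text \<open>Conventions: an n x n complex matrix is a function Y :: nat => nat => complex whose
relevant entries are Y i j for i, j in {1..n} (1-based, as in the paper).\<close>

type_synonym cmat = "nat \<Rightarrow> nat \<Rightarrow> complex"

definition mat_mult :: "nat \<Rightarrow> cmat \<Rightarrow> cmat \<Rightarrow> cmat" where
  "mat_mult m P R = (\<lambda>i j. \<Sum>l=1..m. P i l * R l j)"

definition mat_id :: cmat where
  "mat_id = (\<lambda>i j. if i = j then 1 else 0)"

definition mat_apply :: "nat \<Rightarrow> cmat \<Rightarrow> (nat \<Rightarrow> complex) \<Rightarrow> (nat \<Rightarrow> complex)" where
  "mat_apply m P v = (\<lambda>i. \<Sum>j=1..m. P i j * v j)"

definition mat_trace :: "nat \<Rightarrow> cmat \<Rightarrow> complex" where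
  "mat_trace m P = (\<Sum>i=1..m. P i i)"

definition cvecs :: "nat \<Rightarrow> (nat \<Rightarrow> complex) set" where
  "cvecs m = {v. \<forall>i. i \<notin> {1..m} \<longrightarrow> v i = 0}"

definition is_subspace :: "nat \<Rightarrow> (nat \<Rightarrow> complex) set \<Rightarrow> bool" where
  "is_subspace m W \<longleftrightarrow> W \<subseteq> cvecs m \<and> (\<lambda>_. 0) \<in> W \<and>
     (\<forall>v\<in>W. \<forall>w\<in>W. (\<lambda>i. v i + w i) \<in> W) \<and> (\<forall>c. \<forall>v\<in>W. (\<lambda>i. c * v i) \<in> W)"

definition is_rep :: "nat \<Rightarrow> nat \<Rightarrow> ((nat \<Rightarrow> nat) \<Rightarrow> cmat) \<Rightarrow> bool" where
  "is_rep n m \<rho> \<longleftrightarrow> m \<ge> 1 \<and>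
     (\<forall>\<sigma>. \<sigma> permutes {1..n} \<longrightarrow> (\<forall>i j. (i \<notin> {1..m} \<or> j \<notin> {1..m}) \<longrightarrow> \<rho> \<sigma> i j = 0)) \<and>
     (\<forall>i\<in>{1..m}. \<forall>j\<in>{1..m}. \<rho> id i j = mat_id i j) \<and>
     (\<forall>\<sigma> \<tau>. \<sigma> permutes {1..n} \<longrightarrow> \<tau> permutes {1..n} \<longrightarrow>
        \<rho> (\<sigma> \<circ> \<tau>) = mat_mult m (\<rho> \<sigma>) (\<rho> \<tau>))"

definition is_irred_rep :: "nat \<Rightarrow> nat \<Rightarrow> ((nat \<Rightarrow> nat) \<Rightarrow> cmat) \<Rightarrow> bool" where
  "is_irred_rep n m \<rho> \<longleftrightarrow> is_rep n m \<rho> \<and>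
     (\<forall>W. is_subspace m W \<longrightarrow>
        (\<forall>\<sigma>. \<sigma> permutes {1..n} \<longrightarrow> (\<forall>v\<in>W. mat_apply m (\<rho> \<sigma>) v \<in> W)) \<longrightarrow>
        W = {\<lambda>_. 0} \<or> W = cvecs m)"

definition irreducible_character :: "nat \<Rightarrow> ((nat \<Rightarrow> nat) \<Rightarrow> complex) \<Rightarrow> bool" where
  "irreducible_character n chi \<longleftrightarrow>
     (\<exists>m \<rho>. is_irred_rep n m \<rho> \<and> (\<forall>\<sigma>. \<sigma> permutes {1..n} \<longrightarrow> chi \<sigma> = mat_trace m (\<rho> \<sigma>)))"

definition d_chi :: "nat \<Rightarrow> ((nat \<Rightarrow> nat) \<Rightarrow> complex) \<Rightarrow> cmat \<Rightarrow> complex" where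
  "d_chi n chi Y = (\<Sum>\<sigma>\<in>{\<sigma>. \<sigma> permutes {1..n}}. chi \<sigma> * (\<Prod>i=1..n. Y i (\<sigma> i)))"

definition partial :: "nat \<Rightarrow> ((nat \<Rightarrow> complex) \<Rightarrow> complex) \<Rightarrow> (nat \<Rightarrow> complex) \<Rightarrow> complex" where
  "partial i f = (\<lambda>t. deriv (\<lambda>s. f (t(i := s))) (t i))"

text \<open>D^k d_chi(A)(X^1,...,X^k) = d^k/dt_1...dt_k at t = 0 of d_chi(A + t_1 X^1 + ... + t_k X^k).\<close>
definition Dk_d_chi :: "nat \<Rightarrow> ((nat \<Rightarrow> nat) \<Rightarrow> complex) \<Rightarrow> nat \<Rightarrow> cmat \<Rightarrow> (nat \<Rightarrow> cmat) \<Rightarrow> complex" where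
  "Dk_d_chi n chi k A Xs =
     foldr partial [1..<k+1]
       (\<lambda>t. d_chi n chi (\<lambda>i j. A i j + (\<Sum>p=1..k. t p * Xs p i j))) (\<lambda>_. 0)"

definition Q :: "nat \<Rightarrow> nat \<Rightarrow> (nat \<Rightarrow> nat) set" where
  "Q k n = {\<alpha>. strict_mono_on {1..k} \<alpha> \<and> \<alpha> ` {1..k} \<subseteq> {1..n} \<and> (\<forall>i. i \<notin> {1..k} \<longrightarrow> \<alpha> i = 0)}"

definition compl_seq :: "nat \<Rightarrow> nat \<Rightarrow> (nat \<Rightarrow> nat) \<Rightarrow> (nat \<Rightarrow> nat)" where
  "compl_seq k n \<alpha> = (THE \<gamma>. \<gamma> \<in> Q (n - k) n \<and> \<gamma> ` {1..n-k} = {1..n} - \<alpha> ` {1..k})"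

text \<open>X^\<sigma>_\<beta>: column \<beta>(p) equals column \<beta>(p) of X^{\<sigma>(p)}; other columns zero.\<close>
definition X_sigma_beta :: "nat \<Rightarrow> (nat \<Rightarrow> cmat) \<Rightarrow> (nat \<Rightarrow> nat) \<Rightarrow> (nat \<Rightarrow> nat) \<Rightarrow> cmat" where
  "X_sigma_beta k Xs \<sigma> \<beta> = (\<lambda>i j. if j \<in> \<beta> ` {1..k}
       then Xs (\<sigma> (the_inv_into {1..k} \<beta> j)) i j else 0)"

definition submat :: "nat \<Rightarrow> cmat \<Rightarrow> (nat \<Rightarrow> nat) \<Rightarrow> (nat \<Rightarrow> nat) \<Rightarrow> cmat" where
  "submat k Y \<alpha> \<beta> = (\<lambda>i j. if i \<in> {1..k} \<and> j \<in> {1..k} then Y (\<alpha> i) (\<beta> j) else 0)"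

definition compl_submat :: "nat \<Rightarrow> nat \<Rightarrow> cmat \<Rightarrow> (nat \<Rightarrow> nat) \<Rightarrow> (nat \<Rightarrow> nat) \<Rightarrow> cmat" where
  "compl_submat n k Y \<alpha> \<beta> = submat (n - k) Y (compl_seq k n \<alpha>) (compl_seq k n \<beta>)"

definition dirsum_ab :: "nat \<Rightarrow> nat \<Rightarrow> cmat \<Rightarrow> (nat \<Rightarrow> nat) \<Rightarrow> (nat \<Rightarrow> nat) \<Rightarrow> cmat \<Rightarrow> cmat" where
  "dirsum_ab n k P \<alpha> \<beta> R = (\<lambda>i j.
     if i \<notin> {1..n} \<or> j \<notin> {1..n} then 0
     else if i \<in> \<alpha> ` {1..k} \<and> j \<in> \<beta> ` {1..k}
       then P (the_inv_into {1..k} \<alpha> i) (the_inv_into {1..k} \<beta> j)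
     else if i \<notin> \<alpha> ` {1..k} \<and> j \<notin> \<beta> ` {1..k}
       then R (the_inv_into {1..n-k} (compl_seq k n \<alpha>) i)
              (the_inv_into {1..n-k} (compl_seq k n \<beta>) j)
     else 0)"

end

theory Submission
  imports Defs
begin


definition InjE :: "nat set \<Rightarrow> nat set \<Rightarrow> (nat \<Rightarrow> nat) set" where
  "InjE D I = {g \<in> D \<rightarrow>\<^sub>E I. inj_on g D}"

lemma finite_InjE: "finite D \<Longrightarrow> finite I \<Longrightarrow> finite (InjE D I)"
  unfolding InjE_def by (rule finite_subset[of _ "D \<rightarrow>\<^sub>E I"]) (auto intro: finite_PiE)

lemma affine_deriv:
  assumes "finite P" "q \<in> P"
  shows "((\<lambda>s. a + (\<Sum>p\<in>P. (t(q:=s)) p * x p)) has_field_derivative x q) (at z)"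
proof -
  have "((\<lambda>s. a + (\<Sum>p\<in>P. (t(q:=s)) p * x p)) has_field_derivative
          0 + (\<Sum>p\<in>P. (if p = q then x p else 0))) (at z)"
    by (intro derivative_intros) (auto intro!: derivative_eq_intros)
  also have "0 + (\<Sum>p\<in>P. (if p = q then x p else 0)) = x q"
    using assms by simp
  finally show ?thesis .
qed

lemma InjE_insert_bij:
  assumes "q \<notin> D"
  shows "bij_betw (\<lambda>(g,i). g(q:=i)) (SIGMA g:InjE D I. I - g ` D) (InjE (insert q D) I)"
proof (rule bij_betw_byWitness[where f'="\<lambda>g'. (g'(q:=undefined), g' q)"])
  show "\<forall>a\<in>(SIGMA g:InjE D I. I - g ` D). (\<lambda>g'. (g'(q:=undefined), g' q)) ((\<lambda>(g,i). g(q:=i)) a) = a"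
  proof -
    have "\<forall>g\<in>InjE D I. g q = undefined" using assms by (auto simp: InjE_def PiE_def extensional_def)
    then show ?thesis by (auto simp: fun_upd_idem)
  qed
  show "\<forall>a'\<in>InjE (insert q D) I. (\<lambda>(g,i). g(q:=i)) ((\<lambda>g'. (g'(q:=undefined), g' q)) a') = a'"
    by auto
  show "(\<lambda>(g,i). g(q:=i)) ` (SIGMA g:InjE D I. I - g ` D) \<subseteq> InjE (insert q D) I"
  proof clarify
    fix g i assume g: "g \<in> InjE D I" "i \<in> I" "i \<notin> g ` D"
    have gi: "g \<in> D \<rightarrow>\<^sub>E I" "inj_on g D" using g by (auto simp: InjE_def)
    have "g(q:=i) \<in> insert q D \<rightarrow>\<^sub>E I" using gi g assms by (auto simp: PiE_def extensional_def)
    moreover have "inj_on (g(q:=i)) D"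
    proof -
      have "inj_on (g(q:=i)) D \<longleftrightarrow> inj_on g D"
        using assms by (intro inj_on_cong) auto
      then show ?thesis using gi(2) by simp
    qed
    moreover have "(g(q:=i)) ` D = g ` D" using assms by auto
    ultimately show "g(q:=i) \<in> InjE (insert q D) I"
      using g assms by (simp add: InjE_def)
  qed
  show "(\<lambda>g'. (g'(q:=undefined), g' q)) ` InjE (insert q D) I \<subseteq> (SIGMA g:InjE D I. I - g ` D)"
  proof
    fix y assume "y \<in> (\<lambda>g'. (g'(q:=undefined), g' q)) ` InjE (insert q D) I"
    then obtain g' where g': "g' \<in> InjE (insert q D) I" and y: "y = (g'(q:=undefined), g' q)" by auto
    have gi: "g' \<in> insert q D \<rightarrow>\<^sub>E I" "inj_on g' (insert q D)" using g' by (auto simp: InjE_def)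
    have f1: "g'(q:=undefined) \<in> D \<rightarrow>\<^sub>E I" using gi assms by (auto simp: PiE_def extensional_def)
    have f2: "inj_on (g'(q:=undefined)) D"
    proof -
      have "inj_on g' D" using gi(2) by (rule inj_on_subset) auto
      moreover have "inj_on (g'(q:=undefined)) D \<longleftrightarrow> inj_on g' D"
        using assms by (intro inj_on_cong) auto
      ultimately show ?thesis by simp
    qed
    have im: "(g'(q:=undefined)) ` D = g' ` D" using assms by auto
    have f3: "g' q \<in> I" using gi(1) by auto
    have f4: "g' q \<notin> g' ` D" using gi(2) assms by (simp add: inj_on_insert)
    show "y \<in> (SIGMA g:InjE D I. I - g ` D)"
      unfolding y
    proof (rule SigmaI)
      show "g'(q:=undefined) \<in> InjE D I" using f1 f2 unfolding InjE_def by blast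
      show "g' q \<in> I - (g'(q:=undefined)) ` D" using f3 f4 im by auto
    qed
  qed
qed

lemma foldr_partial_formula:
  fixes c :: "'b \<Rightarrow> complex" and a :: "'b \<Rightarrow> nat \<Rightarrow> complex" and x :: "'b \<Rightarrow> nat \<Rightarrow> nat \<Rightarrow> complex"
  assumes fin: "finite I" "finite P" "finite R" and dist: "distinct ps" and sub: "set ps \<subseteq> P"
  shows "foldr partial ps (\<lambda>t. \<Sum>\<pi>\<in>R. c \<pi> * (\<Prod>i\<in>I. a \<pi> i + (\<Sum>p\<in>P. t p * x \<pi> i p))) t
       = (\<Sum>\<pi>\<in>R. c \<pi> * (\<Sum>g\<in>InjE (set ps) I. (\<Prod>p\<in>set ps. x \<pi> (g p) p) *
              (\<Prod>i\<in>I - g ` set ps. a \<pi> i + (\<Sum>p\<in>P. t p * x \<pi> i p))))"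
  using dist sub
proof (induction ps arbitrary: t)
  case Nil
  then show ?case by (simp add: InjE_def)
next
  case (Cons q ps)
  let ?D = "set ps"
  let ?h = "\<lambda>t \<pi> i. a \<pi> i + (\<Sum>p\<in>P. t p * x \<pi> i p)"
  have qD: "q \<notin> ?D" and qP: "q \<in> P" using Cons.prems by auto
  have IH: "\<And>t. foldr partial ps (\<lambda>t. \<Sum>\<pi>\<in>R. c \<pi> * (\<Prod>i\<in>I. ?h t \<pi> i)) t
     = (\<Sum>\<pi>\<in>R. c \<pi> * (\<Sum>g\<in>InjE ?D I. (\<Prod>p\<in>?D. x \<pi> (g p) p) * (\<Prod>i\<in>I - g ` ?D. ?h t \<pi> i)))"
    using Cons by auto
  have der: "((\<lambda>s. \<Sum>\<pi>\<in>R. c \<pi> * (\<Sum>g\<in>InjE ?D I. (\<Prod>p\<in>?D. x \<pi> (g p) p) * (\<Prod>i\<in>I - g ` ?D. ?h (t(q:=s)) \<pi> i)))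
     has_field_derivative
      (\<Sum>\<pi>\<in>R. c \<pi> * (\<Sum>g\<in>InjE ?D I. (\<Prod>p\<in>?D. x \<pi> (g p) p) *
          (\<Sum>i\<in>I - g ` ?D. x \<pi> i q * (\<Prod>j\<in>I - g ` ?D - {i}. ?h (t(q:=t q)) \<pi> j))))) (at (t q))"
    by (intro DERIV_sum DERIV_cmult has_field_derivative_prod affine_deriv fin qP)
  have "foldr partial (q # ps) (\<lambda>t. \<Sum>\<pi>\<in>R. c \<pi> * (\<Prod>i\<in>I. ?h t \<pi> i)) t
     = deriv (\<lambda>s. \<Sum>\<pi>\<in>R. c \<pi> * (\<Sum>g\<in>InjE ?D I. (\<Prod>p\<in>?D. x \<pi> (g p) p) * (\<Prod>i\<in>I - g ` ?D. ?h (t(q:=s)) \<pi> i))) (t q)"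
    by (simp add: partial_def IH)
  also have "\<dots> = (\<Sum>\<pi>\<in>R. c \<pi> * (\<Sum>g\<in>InjE ?D I. (\<Prod>p\<in>?D. x \<pi> (g p) p) *
          (\<Sum>i\<in>I - g ` ?D. x \<pi> i q * (\<Prod>j\<in>I - g ` ?D - {i}. ?h t \<pi> j))))"
    using DERIV_imp_deriv[OF der] by simp
  also have "\<dots> = (\<Sum>\<pi>\<in>R. c \<pi> * (\<Sum>g\<in>InjE (set (q#ps)) I. (\<Prod>p\<in>set (q#ps). x \<pi> (g p) p) *
              (\<Prod>i\<in>I - g ` set (q#ps). ?h t \<pi> i)))"
  proof (rule sum.cong[OF refl], rule arg_cong[where f="\<lambda>z. c _ * z"])
    fix \<pi>
    have fD: "finite (InjE ?D I)" using fin by (intro finite_InjE) auto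
    define L where "L g i = (\<Prod>p\<in>?D. x \<pi> (g p) p) * (x \<pi> i q * (\<Prod>j\<in>I - g ` ?D - {i}. ?h t \<pi> j))" for g i
    define Rf where "Rf g' = (\<Prod>p\<in>set (q#ps). x \<pi> (g' p) p) * (\<Prod>i\<in>I - g' ` set (q#ps). ?h t \<pi> i)" for g'
    have "(\<Sum>g\<in>InjE ?D I. (\<Prod>p\<in>?D. x \<pi> (g p) p) *
          (\<Sum>i\<in>I - g ` ?D. x \<pi> i q * (\<Prod>j\<in>I - g ` ?D - {i}. ?h t \<pi> j)))
       = (\<Sum>z\<in>(SIGMA g:InjE ?D I. I - g ` ?D). L (fst z) (snd z))"
      using sum.Sigma[OF fD, of "\<lambda>g. I - g ` ?D" L] fin unfolding L_def by (simp add: case_prod_beta' sum_distrib_left)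
    also have "\<dots> = (\<Sum>z\<in>(SIGMA g:InjE ?D I. I - g ` ?D). Rf ((fst z)(q:=snd z)))"
    proof (rule sum.cong[OF refl])
      fix z assume "z \<in> (SIGMA g:InjE ?D I. I - g ` ?D)"
      then obtain g i where z: "z = (g,i)" and g: "g \<in> InjE ?D I" and i: "i \<in> I" "i \<notin> g ` ?D" by auto
      have 1: "(\<Prod>p\<in>?D. x \<pi> ((g(q:=i)) p) p) = (\<Prod>p\<in>?D. x \<pi> (g p) p)"
        using qD by (intro prod.cong) auto
      have 2: "(g(q:=i)) ` set (q#ps) = insert i (g ` ?D)" using qD by auto
      have 3: "I - insert i (g ` ?D) = I - g ` ?D - {i}" by auto
      have 4: "(\<Prod>p\<in>set (q#ps). x \<pi> ((g(q:=i)) p) p) = x \<pi> i q * (\<Prod>p\<in>?D. x \<pi> ((g(q:=i)) p) p)"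
        using qD by simp
      show "L (fst z) (snd z) = Rf ((fst z)(q:=snd z))"
        unfolding z L_def Rf_def fst_conv snd_conv 4 1 2 3 by (simp only: mult_ac)
    qed
    also have "\<dots> = (\<Sum>g'\<in>InjE (set (q#ps)) I. Rf g')"
      using sum.reindex_bij_betw[OF InjE_insert_bij[OF qD, of I], of Rf] by (simp add: case_prod_beta')
    finally show "(\<Sum>g\<in>InjE ?D I. (\<Prod>p\<in>?D. x \<pi> (g p) p) *
          (\<Sum>i\<in>I - g ` ?D. x \<pi> i q * (\<Prod>j\<in>I - g ` ?D - {i}. ?h t \<pi> j)))
       = (\<Sum>g'\<in>InjE (set (q#ps)) I. (\<Prod>p\<in>set (q#ps). x \<pi> (g' p) p) * (\<Prod>i\<in>I - g' ` set (q#ps). ?h t \<pi> i))"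
      unfolding Rf_def .
  qed
  finally show ?case .
qed



lemma Q_inj: "\<gamma> \<in> Q m n \<Longrightarrow> inj_on \<gamma> {1..m}"
  unfolding Q_def by (auto intro: strict_mono_on_imp_inj_on)

lemma Q_img: "\<gamma> \<in> Q m n \<Longrightarrow> \<gamma> ` {1..m} \<subseteq> {1..n}"
  unfolding Q_def by auto

lemma Q_out: "\<gamma> \<in> Q m n \<Longrightarrow> i \<notin> {1..m} \<Longrightarrow> \<gamma> i = 0"
  unfolding Q_def by auto

lemma Q_card: "\<gamma> \<in> Q m n \<Longrightarrow> card (\<gamma> ` {1..m}) = m"
  using Q_inj by (simp add: card_image)

lemma finite_Q: "finite (Q m n)"
proof (rule finite_subset)
  show "Q m n \<subseteq> (\<lambda>f i. if i \<in> {1..m} then f i else 0) ` ({1..m} \<rightarrow>\<^sub>E {1..n})"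
  proof
    fix \<gamma> assume g: "\<gamma> \<in> Q m n"
    have "\<gamma> = (\<lambda>i. if i \<in> {1..m} then (restrict \<gamma> {1..m}) i else 0)"
      using Q_out[OF g] by (auto simp: fun_eq_iff)
    moreover have "restrict \<gamma> {1..m} \<in> {1..m} \<rightarrow>\<^sub>E {1..n}" using Q_img[OF g] by auto
    ultimately show "\<gamma> \<in> (\<lambda>f i. if i \<in> {1..m} then f i else 0) ` ({1..m} \<rightarrow>\<^sub>E {1..n})"
      by (rule image_eqI)
  qed
  show "finite ((\<lambda>f i. if i \<in> {1..m} then f i else 0) ` ({1..m} \<rightarrow>\<^sub>E {1..n}))"
    by (intro finite_imageI finite_PiE) auto
qed

lemma Q_list:
  assumes g: "\<gamma> \<in> Q m n"
  shows "sorted_list_of_set (\<gamma> ` {1..m}) = map \<gamma> [1..<m+1]"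
proof -
  have sm: "strict_mono_on {1..m} \<gamma>" using g by (simp add: Q_def)
  have "sorted_wrt (<) (map \<gamma> [1..<m+1])"
    unfolding sorted_wrt_iff_nth_less
  proof (intro allI impI)
    fix i j assume "i < j" "j < length (map \<gamma> [1..<m+1])"
    then have "i < m" "j < m" by (simp_all del: upt_Suc)
    then have "map \<gamma> [1..<m+1] ! i = \<gamma> (Suc i)" "map \<gamma> [1..<m+1] ! j = \<gamma> (Suc j)"
      by (simp_all del: upt_Suc add: nth_upt)
    then show "map \<gamma> [1..<m+1] ! i < map \<gamma> [1..<m+1] ! j"
      using \<open>i < j\<close> \<open>j < m\<close> by (auto intro!: strict_mono_onD[OF sm])
  qed
  moreover have "set (map \<gamma> [1..<m+1]) = \<gamma> ` {1..m}" by auto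
  moreover have "length (map \<gamma> [1..<m+1]) = card (\<gamma> ` {1..m})" using Q_card[OF g] by simp
  ultimately show ?thesis
    using sorted_list_of_set_unique[of "\<gamma> ` {1..m}" "map \<gamma> [1..<m+1]"] by auto
qed

lemma Q_unique:
  assumes "\<gamma> \<in> Q m n" "\<delta> \<in> Q m n" "\<gamma> ` {1..m} = \<delta> ` {1..m}"
  shows "\<gamma> = \<delta>"
proof
  fix i
  have "map \<gamma> [1..<m+1] = map \<delta> [1..<m+1]" using Q_list assms by metis
  then have "\<forall>i\<in>set [1..<m+1]. \<gamma> i = \<delta> i" by (simp del: upt_Suc add: map_eq_conv)
  then have "\<forall>i\<in>{1..m}. \<gamma> i = \<delta> i" by (simp del: upt_Suc)
  then show "\<gamma> i = \<delta> i"
  proof (cases "i \<in> {1..m}")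
    case False
    then show ?thesis using Q_out[OF assms(1) False] Q_out[OF assms(2) False] by simp
  qed auto
qed

lemma Q_exists:
  assumes "S \<subseteq> {1..n}" "card S = m"
  shows "\<exists>\<gamma>\<in>Q m n. \<gamma> ` {1..m} = S"
proof -
  have fS: "finite S" using assms(1) finite_subset by blast
  define xs where "xs = sorted_list_of_set S"
  have len: "length xs = m" using assms fS by (simp add: xs_def)
  have st: "sorted_wrt (<) xs" by (simp add: xs_def)
  have sx: "set xs = S" using fS by (simp add: xs_def)
  define \<gamma> where "\<gamma> i = (if i \<in> {1..m} then xs ! (i - 1) else 0)" for i
  have img: "\<gamma> ` {1..m} = S"
  proof -
    have "\<gamma> ` {1..m} = (\<lambda>j. xs ! j) ` {..<m}"
    proof (rule set_eqI, rule iffI)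
      fix y assume "y \<in> \<gamma> ` {1..m}"
      then obtain i where "i \<in> {1..m}" "y = xs ! (i - 1)" by (auto simp: \<gamma>_def)
      then show "y \<in> (\<lambda>j. xs ! j) ` {..<m}" by (intro image_eqI[of _ _ "i - 1"]) auto
    next
      fix y assume "y \<in> (\<lambda>j. xs ! j) ` {..<m}"
      then obtain j where "j < m" "y = xs ! j" by auto
      then show "y \<in> \<gamma> ` {1..m}" by (intro image_eqI[of _ _ "j + 1"]) (auto simp: \<gamma>_def)
    qed
    also have "\<dots> = set xs" using len by (auto simp: set_conv_nth)
    finally show ?thesis using sx by simp
  qed
  have "\<gamma> \<in> Q m n"
    unfolding Q_def
  proof (intro CollectI conjI allI impI)
    show "strict_mono_on {1..m} \<gamma>"
    proof (rule strict_mono_onI)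
      fix r s assume "r \<in> {1..m}" "s \<in> {1..m}" "r < s"
      then show "\<gamma> r < \<gamma> s" using sorted_wrt_nth_less[OF st, of "r - 1" "s - 1"] len
        by (auto simp: \<gamma>_def)
    qed
    show "\<gamma> ` {1..m} \<subseteq> {1..n}" using img assms by simp
    fix i assume "i \<notin> {1..m}" then show "\<gamma> i = 0" unfolding \<gamma>_def by auto
  qed
  then show ?thesis using img by blast
qed

lemma Q_ex1:
  assumes "S \<subseteq> {1..n}" "card S = m"
  shows "\<exists>!\<gamma>. \<gamma> \<in> Q m n \<and> \<gamma> ` {1..m} = S"
proof -
  obtain \<gamma> where g: "\<gamma> \<in> Q m n" "\<gamma> ` {1..m} = S" using Q_exists[OF assms] by blast
  show ?thesis
  proof (rule ex1I[of _ \<gamma>])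
    show "\<gamma> \<in> Q m n \<and> \<gamma> ` {1..m} = S" using g by simp
    fix \<delta> assume "\<delta> \<in> Q m n \<and> \<delta> ` {1..m} = S"
    then show "\<delta> = \<gamma>" using Q_unique[of \<delta> m n \<gamma>] g by simp
  qed
qed

lemma compl_seq:
  assumes "\<alpha> \<in> Q k n" "k \<le> n"
  shows "compl_seq k n \<alpha> \<in> Q (n - k) n" "compl_seq k n \<alpha> ` {1..n-k} = {1..n} - \<alpha> ` {1..k}"
proof -
  have "card ({1..n} - \<alpha> ` {1..k}) = n - k"
    using Q_img[OF assms(1)] Q_card[OF assms(1)] by (simp add: card_Diff_subset)
  then have "\<exists>!\<gamma>. \<gamma> \<in> Q (n - k) n \<and> \<gamma> ` {1..n-k} = {1..n} - \<alpha> ` {1..k}"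
    by (intro Q_ex1) auto
  note th = theI'[OF this]
  show "compl_seq k n \<alpha> \<in> Q (n - k) n" unfolding compl_seq_def by (rule conjunct1[OF th])
  show "compl_seq k n \<alpha> ` {1..n-k} = {1..n} - \<alpha> ` {1..k}" unfolding compl_seq_def by (rule conjunct2[OF th])
qed



lemma M_entries:
  fixes Xs :: "nat \<Rightarrow> cmat" and \<sigma> :: "nat \<Rightarrow> nat" and A :: cmat
  assumes a: "\<alpha> \<in> Q k n" and b: "\<beta> \<in> Q k n" and kn: "k \<le> n"
    and i: "i \<in> {1..n}" and j: "j \<in> {1..n}"
  defines "M \<equiv> dirsum_ab n k (submat k (X_sigma_beta k Xs \<sigma> \<beta>) \<alpha> \<beta>) \<alpha> \<beta> (compl_submat n k A \<alpha> \<beta>)"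
  shows "i \<in> \<alpha> ` {1..k} \<Longrightarrow> j \<in> \<beta> ` {1..k} \<Longrightarrow> M i j = Xs (\<sigma> (the_inv_into {1..k} \<beta> j)) i j"
    and "i \<notin> \<alpha> ` {1..k} \<Longrightarrow> j \<notin> \<beta> ` {1..k} \<Longrightarrow> M i j = A i j"
    and "i \<in> \<alpha> ` {1..k} \<Longrightarrow> j \<notin> \<beta> ` {1..k} \<Longrightarrow> M i j = 0"
proof -
  assume ia: "i \<in> \<alpha> ` {1..k}" and jb: "j \<in> \<beta> ` {1..k}"
  define p where "p = the_inv_into {1..k} \<alpha> i"
  define q where "q = the_inv_into {1..k} \<beta> j"
  have p: "p \<in> {1..k}" "\<alpha> p = i" unfolding p_def
    using ia Q_inj[OF a] by (auto simp: the_inv_into_f_f)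
  have q: "q \<in> {1..k}" "\<beta> q = j" unfolding q_def
    using jb Q_inj[OF b] by (auto simp: the_inv_into_f_f)
  have "M i j = submat k (X_sigma_beta k Xs \<sigma> \<beta>) \<alpha> \<beta> p q"
    unfolding M_def dirsum_ab_def p_def q_def using i j ia jb by simp
  also have "\<dots> = X_sigma_beta k Xs \<sigma> \<beta> i j" using p q by (simp add: submat_def)
  also have "\<dots> = Xs (\<sigma> (the_inv_into {1..k} \<beta> j)) i j" using jb by (simp add: X_sigma_beta_def)
  finally show "M i j = Xs (\<sigma> (the_inv_into {1..k} \<beta> j)) i j" .
next
  assume ia: "i \<notin> \<alpha> ` {1..k}" and jb: "j \<notin> \<beta> ` {1..k}"
  define ca where "ca = compl_seq k n \<alpha>"
  define cb where "cb = compl_seq k n \<beta>"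
  have ca: "ca \<in> Q (n - k) n" "ca ` {1..n-k} = {1..n} - \<alpha> ` {1..k}" using compl_seq[OF a kn] ca_def by auto
  have cb: "cb \<in> Q (n - k) n" "cb ` {1..n-k} = {1..n} - \<beta> ` {1..k}" using compl_seq[OF b kn] cb_def by auto
  define p where "p = the_inv_into {1..n-k} ca i"
  define q where "q = the_inv_into {1..n-k} cb j"
  have iin: "i \<in> ca ` {1..n-k}" using ca i ia by auto
  have jin: "j \<in> cb ` {1..n-k}" using cb j jb by auto
  have p: "p \<in> {1..n-k}" "ca p = i" unfolding p_def
    using iin Q_inj[OF ca(1)] by (auto simp: the_inv_into_f_f)
  have q: "q \<in> {1..n-k}" "cb q = j" unfolding q_def
    using jin Q_inj[OF cb(1)] by (auto simp: the_inv_into_f_f)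
  have "M i j = compl_submat n k A \<alpha> \<beta> p q"
    unfolding M_def dirsum_ab_def p_def q_def ca_def cb_def using i j ia jb by simp
  also have "\<dots> = A (ca p) (cb q)" using p q by (simp add: compl_submat_def submat_def ca_def cb_def)
  finally show "M i j = A i j" using p q by simp
next
  assume ia: "i \<in> \<alpha> ` {1..k}" and jb: "j \<notin> \<beta> ` {1..k}"
  then show "M i j = 0" unfolding M_def dirsum_ab_def using i j by simp
qed

lemma prod_M:
  assumes a: "\<alpha> \<in> Q k n" and b: "\<beta> \<in> Q k n" and kn: "k \<le> n" and pi: "\<pi> permutes {1..n}"
  shows "(\<Prod>i\<in>{1..n}. dirsum_ab n k (submat k (X_sigma_beta k Xs \<sigma> \<beta>) \<alpha> \<beta>) \<alpha> \<beta> (compl_submat n k A \<alpha> \<beta>) i (\<pi> i))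
     = (if \<pi> ` \<alpha> ` {1..k} = \<beta> ` {1..k}
        then (\<Prod>b\<in>{1..k}. Xs (\<sigma> b) (inv \<pi> (\<beta> b)) (\<beta> b)) * (\<Prod>i\<in>{1..n} - \<alpha> ` {1..k}. A i (\<pi> i))
        else 0)"
proof -
  define M where "M = dirsum_ab n k (submat k (X_sigma_beta k Xs \<sigma> \<beta>) \<alpha> \<beta>) \<alpha> \<beta> (compl_submat n k A \<alpha> \<beta>)"
  let ?aK = "\<alpha> ` {1..k}" and ?bK = "\<beta> ` {1..k}"
  have aN: "?aK \<subseteq> {1..n}" using Q_img[OF a] .
  have piN: "\<And>i. i \<in> {1..n} \<Longrightarrow> \<pi> i \<in> {1..n}" using permutes_in_image[OF pi] by simp
  show ?thesis
  proof (cases "\<pi> ` ?aK = ?bK")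
    case True
    have 1: "(\<Prod>i\<in>{1..n}. M i (\<pi> i)) = (\<Prod>i\<in>{1..n} - ?aK. M i (\<pi> i)) * (\<Prod>i\<in>?aK. M i (\<pi> i))"
      using prod.subset_diff[OF aN, of "\<lambda>i. M i (\<pi> i)"] by simp
    have 2: "(\<Prod>i\<in>{1..n} - ?aK. M i (\<pi> i)) = (\<Prod>i\<in>{1..n} - ?aK. A i (\<pi> i))"
    proof (rule prod.cong[OF refl])
      fix i assume i: "i \<in> {1..n} - ?aK"
      have "\<pi> i \<notin> ?bK"
      proof
        assume "\<pi> i \<in> ?bK"
        then have "\<pi> i \<in> \<pi> ` ?aK" using True by simp
        then obtain i' where i': "i' \<in> ?aK" "\<pi> i = \<pi> i'" by (auto simp: image_iff)
        then have "i = i'" using permutes_inj[OF pi] by (simp add: inj_eq)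
        then show False using i i' by simp
      qed
      moreover have iN: "i \<in> {1..n}" "i \<notin> ?aK" using i by auto
      ultimately show "M i (\<pi> i) = A i (\<pi> i)" unfolding M_def
        using M_entries(2)[OF a b kn iN(1) piN[OF iN(1)], of Xs \<sigma> A] by simp
    qed
    have hb: "bij_betw (\<lambda>b. inv \<pi> (\<beta> b)) {1..k} ?aK"
    proof -
      have "bij_betw \<beta> {1..k} ?bK" using Q_inj[OF b] by (rule inj_on_imp_bij_betw)
      moreover have "bij_betw (inv \<pi>) ?bK ?aK"
      proof -
        have "inj_on (inv \<pi>) ?bK" using permutes_inj[OF permutes_inv[OF pi]] by (auto intro: inj_on_subset)
        moreover have "inv \<pi> ` ?bK = ?aK"
        proof -
          have "inv \<pi> ` \<pi> ` ?aK = ?aK" by (simp add: image_image permutes_inverses(2)[OF pi])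
          then show ?thesis using True by simp
        qed
        ultimately show ?thesis by (auto simp: bij_betw_def)
      qed
      ultimately show ?thesis using bij_betw_trans[of \<beta> "{1..k}" ?bK "inv \<pi>" ?aK] by (simp add: o_def)
    qed
    have 3: "(\<Prod>i\<in>?aK. M i (\<pi> i)) = (\<Prod>b\<in>{1..k}. Xs (\<sigma> b) (inv \<pi> (\<beta> b)) (\<beta> b))"
    proof -
      have "(\<Prod>b\<in>{1..k}. Xs (\<sigma> b) (inv \<pi> (\<beta> b)) (\<beta> b)) = (\<Prod>b\<in>{1..k}. (\<lambda>i. M i (\<pi> i)) (inv \<pi> (\<beta> b)))"
      proof (rule prod.cong[OF refl])
        fix b assume bK: "b \<in> {1..k}"
        have bN: "\<beta> b \<in> {1..n}" using Q_img[OF b] bK by blast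
        have e1: "\<pi> (inv \<pi> (\<beta> b)) = \<beta> b" by (rule permutes_inverses(1)[OF pi])
        have iaK: "inv \<pi> (\<beta> b) \<in> ?aK" using hb bK by (auto simp: bij_betw_def)
        have iN: "inv \<pi> (\<beta> b) \<in> {1..n}" using iaK aN by auto
        have e2: "the_inv_into {1..k} \<beta> (\<beta> b) = b" using Q_inj[OF b] bK by (rule the_inv_into_f_f)
        show "Xs (\<sigma> b) (inv \<pi> (\<beta> b)) (\<beta> b) = (\<lambda>i. M i (\<pi> i)) (inv \<pi> (\<beta> b))"
          unfolding M_def using M_entries(1)[OF a b kn iN bN, of Xs \<sigma> A] iaK bK e1 e2 by simp
      qed
      also have "\<dots> = (\<Prod>i\<in>?aK. M i (\<pi> i))" by (rule prod.reindex_bij_betw[OF hb])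
      finally show ?thesis by simp
    qed
    have "(\<Prod>i\<in>{1..n}. M i (\<pi> i)) = (\<Prod>b\<in>{1..k}. Xs (\<sigma> b) (inv \<pi> (\<beta> b)) (\<beta> b)) * (\<Prod>i\<in>{1..n} - ?aK. A i (\<pi> i))"
      unfolding 1 2 3 by (rule mult.commute)
    then show ?thesis unfolding M_def using True by simp
  next
    case False
    have "\<exists>i\<in>?aK. \<pi> i \<notin> ?bK"
    proof (rule ccontr)
      assume "\<not> ?thesis"
      then have sub: "\<pi> ` ?aK \<subseteq> ?bK" by auto
      have "card (\<pi> ` ?aK) = card ?bK"
        using Q_card[OF a] Q_card[OF b] card_image[OF permutes_inj_on[OF pi]] by simp
      then have "\<pi> ` ?aK = ?bK" using sub by (intro card_subset_eq) auto
      then show False using False by simp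
    qed
    then obtain i where i: "i \<in> ?aK" "\<pi> i \<notin> ?bK" by blast
    have iN: "i \<in> {1..n}" using i aN by auto
    have "M i (\<pi> i) = 0" unfolding M_def using M_entries(3)[OF a b kn iN piN[OF iN], of Xs \<sigma> A] i by simp
    then have "(\<Prod>i\<in>{1..n}. M i (\<pi> i)) = 0" using iN by (intro prod_zero) auto
    then show ?thesis unfolding M_def using False by simp
  qed
qed



lemma bij_Sk_Q:
  "bij_betw (\<lambda>(\<sigma>,\<beta>). restrict (\<lambda>p. \<beta> (inv \<sigma> p)) {1..k}) ({\<sigma>. \<sigma> permutes {1..k}} \<times> Q k n) (InjE {1..k} {1..n})"
  unfolding bij_betw_def
proof (intro conjI)
  let ?K = "{1..k::nat}" and ?N = "{1..n::nat}"
  let ?f = "\<lambda>(\<sigma>,\<beta>). restrict (\<lambda>p. \<beta> (inv \<sigma> p)) ?K"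
  show "inj_on ?f ({\<sigma>. \<sigma> permutes ?K} \<times> Q k n)"
  proof (rule inj_onI, clarify)
    fix \<sigma> \<beta> \<sigma>' \<beta>'
    assume s: "\<sigma> permutes ?K" and b: "\<beta> \<in> Q k n" and s': "\<sigma>' permutes ?K" and b': "\<beta>' \<in> Q k n"
      and eq: "restrict (\<lambda>p. \<beta> (inv \<sigma> p)) ?K = restrict (\<lambda>p. \<beta>' (inv \<sigma>' p)) ?K"
    have isg: "inv \<sigma> permutes ?K" "inv \<sigma>' permutes ?K" using permutes_inv[OF s] permutes_inv[OF s'] by simp_all
    have pe: "\<And>p. p \<in> ?K \<Longrightarrow> \<beta> (inv \<sigma> p) = \<beta>' (inv \<sigma>' p)"
    proof -
      fix p assume "p \<in> ?K"
      then show "\<beta> (inv \<sigma> p) = \<beta>' (inv \<sigma>' p)" using fun_cong[OF eq, of p] by simp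
    qed
    have "\<beta> ` ?K = \<beta> ` inv \<sigma> ` ?K" by (simp only: permutes_image[OF isg(1)])
    also have "\<dots> = (\<lambda>p. \<beta> (inv \<sigma> p)) ` ?K" by (rule image_image)
    also have "\<dots> = (\<lambda>p. \<beta>' (inv \<sigma>' p)) ` ?K" using pe by (rule image_cong[OF refl])
    also have "\<dots> = \<beta>' ` inv \<sigma>' ` ?K" by (rule image_image[symmetric])
    also have "\<dots> = \<beta>' ` ?K" by (simp only: permutes_image[OF isg(2)])
    finally have bb: "\<beta> = \<beta>'" using Q_unique[OF b b'] by simp
    have "inv \<sigma> = inv \<sigma>'"
    proof
      fix p show "inv \<sigma> p = inv \<sigma>' p"
      proof (cases "p \<in> ?K")
        case True
        then have "inv \<sigma> p \<in> ?K" "inv \<sigma>' p \<in> ?K" using permutes_in_image[OF isg(1)] permutes_in_image[OF isg(2)] by auto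
        moreover have "\<beta> (inv \<sigma> p) = \<beta> (inv \<sigma>' p)" using pe[OF True] bb by simp
        ultimately show ?thesis using inj_onD[OF Q_inj[OF b]] by blast
      next
        case False
        then show ?thesis using permutes_not_in[OF isg(1)] permutes_not_in[OF isg(2)] by simp
      qed
    qed
    then have "inv (inv \<sigma>) = inv (inv \<sigma>')" by simp
    then have "\<sigma> = \<sigma>'" unfolding permutes_inv_inv[OF s] permutes_inv_inv[OF s'] .
    then show "\<sigma> = \<sigma>' \<and> \<beta> = \<beta>'" using bb by simp
  qed
  show "?f ` ({\<sigma>. \<sigma> permutes ?K} \<times> Q k n) = InjE ?K ?N"
  proof (rule set_eqI, rule iffI)
    fix g assume "g \<in> ?f ` ({\<sigma>. \<sigma> permutes ?K} \<times> Q k n)"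
    then obtain z where z: "z \<in> {\<sigma>. \<sigma> permutes ?K} \<times> Q k n" "g = ?f z" by blast
    obtain \<sigma> \<beta> where zz: "z = (\<sigma>, \<beta>)" by (cases z)
    have s: "\<sigma> permutes ?K" and b: "\<beta> \<in> Q k n" using z(1) zz by auto
    have g: "g = restrict (\<lambda>p. \<beta> (inv \<sigma> p)) ?K" using z(2) zz by simp
    have isg: "inv \<sigma> permutes ?K" using s by (rule permutes_inv)
    have inK: "\<And>p. p \<in> ?K \<Longrightarrow> inv \<sigma> p \<in> ?K" using permutes_in_image[OF isg] by simp
    have "\<forall>p\<in>?K. \<beta> (inv \<sigma> p) \<in> ?N" using inK Q_img[OF b] by blast
    then have "g \<in> ?K \<rightarrow>\<^sub>E ?N" unfolding g restrict_PiE_iff by simp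
    moreover have "inj_on g ?K"
    proof (rule inj_onI)
      fix p p' assume pp: "p \<in> ?K" "p' \<in> ?K" "g p = g p'"
      then have "\<beta> (inv \<sigma> p) = \<beta> (inv \<sigma> p')" unfolding g by simp
      then have "inv \<sigma> p = inv \<sigma> p'" using inK[OF pp(1)] inK[OF pp(2)] inj_onD[OF Q_inj[OF b]] by blast
      then show "p = p'" using permutes_inj[OF isg] by (simp add: inj_eq)
    qed
    ultimately show "g \<in> InjE ?K ?N" by (simp add: InjE_def)
  next
    fix g assume g: "g \<in> InjE ?K ?N"
    have gE: "g \<in> ?K \<rightarrow>\<^sub>E ?N" and gi: "inj_on g ?K" using g by (auto simp: InjE_def)
    have gS: "g ` ?K \<subseteq> ?N" using gE by auto
    have cS: "card (g ` ?K) = k" using card_image[OF gi] by simp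
    obtain \<beta> where b: "\<beta> \<in> Q k n" "\<beta> ` ?K = g ` ?K" using Q_exists[OF gS cS] by blast
    define \<tau> where "\<tau> p = (if p \<in> ?K then the_inv_into ?K \<beta> (g p) else p)" for p
    have bb: "bij_betw \<beta> ?K (g ` ?K)" using Q_inj[OF b(1)] b(2) by (auto simp: bij_betw_def)
    have "bij_betw (the_inv_into ?K \<beta> \<circ> g) ?K ?K"
      using bij_betw_trans[OF inj_on_imp_bij_betw[OF gi] bij_betw_the_inv_into[OF bb]] .
    moreover have "bij_betw (the_inv_into ?K \<beta> \<circ> g) ?K ?K = bij_betw \<tau> ?K ?K"
      by (rule bij_betw_cong) (simp add: \<tau>_def)
    ultimately have "bij_betw \<tau> ?K ?K" by simp
    then have t: "\<tau> permutes ?K" by (rule bij_imp_permutes) (auto simp: \<tau>_def)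
    define \<sigma> where "\<sigma> = inv \<tau>"
    have s: "\<sigma> permutes ?K" unfolding \<sigma>_def using t by (rule permutes_inv)
    have isg: "inv \<sigma> = \<tau>" unfolding \<sigma>_def using t by (rule permutes_inv_inv)
    have "restrict (\<lambda>p. \<beta> (inv \<sigma> p)) ?K = g"
    proof
      fix p show "restrict (\<lambda>p. \<beta> (inv \<sigma> p)) ?K p = g p"
      proof (cases "p \<in> ?K")
        case True
        then have "g p \<in> \<beta> ` ?K" using b(2) by simp
        then show ?thesis using True Q_inj[OF b(1)] by (simp add: isg \<tau>_def f_the_inv_into_f)
      next
        case False
        then show ?thesis using PiE_arb[OF gE False] unfolding restrict_def by (simp only: if_not_P[OF False] if_False)
      qed
    qed
    then have "g = ?f (\<sigma>, \<beta>)" by simp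
    moreover have "(\<sigma>, \<beta>) \<in> {\<sigma>. \<sigma> permutes ?K} \<times> Q k n" using s b(1) by simp
    ultimately show "g \<in> ?f ` ({\<sigma>. \<sigma> permutes ?K} \<times> Q k n)" by (rule image_eqI)
  qed
qed

lemma bij_InjE_perm:
  assumes pi: "\<pi> permutes {1..n}"
  shows "bij_betw (\<lambda>g. restrict (\<lambda>p. inv \<pi> (g p)) {1..k}) (InjE {1..k} {1..n}) (InjE {1..k} {1..n})"
proof (rule bij_betw_byWitness[where f'="\<lambda>g. restrict (\<lambda>p. \<pi> (g p)) {1..k}"])
  let ?K = "{1..k::nat}" and ?N = "{1..n::nat}"
  have ip: "inv \<pi> permutes ?N" using pi by (rule permutes_inv)
  have ext: "\<And>g. g \<in> InjE ?K ?N \<Longrightarrow> restrict g ?K = g"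
    by (auto simp: InjE_def PiE_def extensional_def fun_eq_iff)
  show "\<forall>g\<in>InjE ?K ?N. restrict (\<lambda>p. \<pi> (restrict (\<lambda>p. inv \<pi> (g p)) ?K p)) ?K = g"
  proof
    fix g assume g: "g \<in> InjE ?K ?N"
    have "restrict (\<lambda>p. \<pi> (restrict (\<lambda>p. inv \<pi> (g p)) ?K p)) ?K = restrict g ?K"
      by (auto simp: fun_eq_iff permutes_inverses(1)[OF pi])
    then show "restrict (\<lambda>p. \<pi> (restrict (\<lambda>p. inv \<pi> (g p)) ?K p)) ?K = g" using ext[OF g] by simp
  qed
  show "\<forall>g\<in>InjE ?K ?N. restrict (\<lambda>p. inv \<pi> (restrict (\<lambda>p. \<pi> (g p)) ?K p)) ?K = g"
  proof
    fix g assume g: "g \<in> InjE ?K ?N"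
    have "restrict (\<lambda>p. inv \<pi> (restrict (\<lambda>p. \<pi> (g p)) ?K p)) ?K = restrict g ?K"
      by (auto simp: fun_eq_iff permutes_inverses(2)[OF pi])
    then show "restrict (\<lambda>p. inv \<pi> (restrict (\<lambda>p. \<pi> (g p)) ?K p)) ?K = g" using ext[OF g] by simp
  qed
  have gen: "restrict (\<lambda>p. h (g p)) ?K \<in> InjE ?K ?N" if h: "h permutes ?N" and g: "g \<in> InjE ?K ?N" for h g
  proof -
    have gE: "g \<in> ?K \<rightarrow>\<^sub>E ?N" "inj_on g ?K" using g by (simp_all add: InjE_def)
    have "\<forall>p\<in>?K. h (g p) \<in> ?N" using PiE_mem[OF gE(1)] permutes_in_image[OF h] by simp
    then have "restrict (\<lambda>p. h (g p)) ?K \<in> ?K \<rightarrow>\<^sub>E ?N" unfolding restrict_PiE_iff .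
    moreover have "inj_on (restrict (\<lambda>p. h (g p)) ?K) ?K"
    proof -
      have "inj_on (h \<circ> g) ?K" using comp_inj_on[OF gE(2) permutes_inj_on[OF h]] .
      moreover have "inj_on (restrict (\<lambda>p. h (g p)) ?K) ?K \<longleftrightarrow> inj_on (h \<circ> g) ?K"
        by (rule inj_on_cong) simp
      ultimately show ?thesis by simp
    qed
    ultimately show ?thesis by (simp add: InjE_def)
  qed
  show "(\<lambda>g. restrict (\<lambda>p. inv \<pi> (g p)) ?K) ` InjE ?K ?N \<subseteq> InjE ?K ?N" using gen[OF ip] by auto
  show "(\<lambda>g. restrict (\<lambda>p. \<pi> (g p)) ?K) ` InjE ?K ?N \<subseteq> InjE ?K ?N" using gen[OF pi] by auto
qed



lemma part1:
  fixes n k :: nat and chi :: "(nat \<Rightarrow> nat) \<Rightarrow> complex" and A :: cmat and Xs :: "nat \<Rightarrow> cmat"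
  assumes kn: "k \<le> n"
  shows "Dk_d_chi n chi k A Xs =
           (\<Sum>\<sigma>\<in>{\<sigma>. \<sigma> permutes {1..k}}. \<Sum>\<alpha>\<in>Q k n. \<Sum>\<beta>\<in>Q k n.
              d_chi n chi (dirsum_ab n k (submat k (X_sigma_beta k Xs \<sigma> \<beta>) \<alpha> \<beta>) \<alpha> \<beta>
                                 (compl_submat n k A \<alpha> \<beta>)))"
proof -
  define K where "K = {1..k}"
  define N where "N = {1..n}"
  define R where "R = {\<pi>. \<pi> permutes N}"
  define S where "S = {\<sigma>. \<sigma> permutes K}"
  define F where "F \<pi> g = (\<Prod>p\<in>K. Xs p (g p) (\<pi> (g p))) * (\<Prod>i\<in>N - g ` K. A i (\<pi> i))" for \<pi> g :: "nat \<Rightarrow> nat"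
  define T where "T \<pi> \<sigma> \<beta> = (\<Prod>b\<in>K. Xs (\<sigma> b) (inv \<pi> (\<beta> b)) (\<beta> b)) * (\<Prod>i\<in>N - inv \<pi> ` \<beta> ` K. A i (\<pi> i))"
    for \<pi> \<sigma> \<beta> :: "nat \<Rightarrow> nat"
  have finR: "finite R" unfolding R_def N_def by (rule finite_permutations) simp
  have finS: "finite S" unfolding S_def K_def by (rule finite_permutations) simp
  have funeq: "(\<lambda>t. d_chi n chi (\<lambda>i j. A i j + (\<Sum>p=1..k. t p * Xs p i j)))
     = (\<lambda>t. \<Sum>\<pi>\<in>R. chi \<pi> * (\<Prod>i\<in>N. A i (\<pi> i) + (\<Sum>p\<in>K. t p * Xs p i (\<pi> i))))"
    by (simp add: d_chi_def R_def N_def K_def)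
  have setps: "set [1..<k+1] = K" by (auto simp: K_def)
  have L1: "Dk_d_chi n chi k A Xs = (\<Sum>\<pi>\<in>R. chi \<pi> * (\<Sum>g\<in>InjE K N. F \<pi> g))"
  proof -
    have "Dk_d_chi n chi k A Xs = foldr partial [1..<k+1]
       (\<lambda>t. \<Sum>\<pi>\<in>R. chi \<pi> * (\<Prod>i\<in>N. A i (\<pi> i) + (\<Sum>p\<in>K. t p * Xs p i (\<pi> i)))) (\<lambda>_. 0)"
      unfolding Dk_d_chi_def funeq ..
    also have "\<dots> = (\<Sum>\<pi>\<in>R. chi \<pi> * (\<Sum>g\<in>InjE (set [1..<k+1]) N. (\<Prod>p\<in>set [1..<k+1]. Xs p (g p) (\<pi> (g p))) *
              (\<Prod>i\<in>N - g ` set [1..<k+1]. A i (\<pi> i) + (\<Sum>p\<in>K. 0 * Xs p i (\<pi> i)))))"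
      using foldr_partial_formula[where I=N and P=K and R=R and ps="[1..<k+1]" and c=chi
          and a="\<lambda>\<pi> i. A i (\<pi> i)" and x="\<lambda>\<pi> i p. Xs p i (\<pi> i)" and t="\<lambda>_. 0"]
        finR setps by (simp add: N_def K_def)
    also have "\<dots> = (\<Sum>\<pi>\<in>R. chi \<pi> * (\<Sum>g\<in>InjE K N. F \<pi> g))"
      unfolding setps F_def by simp
    finally show ?thesis .
  qed
  have L2: "(\<Sum>g\<in>InjE K N. F \<pi> g) = (\<Sum>\<sigma>\<in>S. \<Sum>\<beta>\<in>Q k n. T \<pi> \<sigma> \<beta>)" if pi: "\<pi> \<in> R" for \<pi>
  proof -
    have pi': "\<pi> permutes N" using pi by (simp add: R_def)
    let ?h = "\<lambda>g. restrict (\<lambda>p. inv \<pi> (g p)) K"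
    let ?f = "\<lambda>(\<sigma>,\<beta>). restrict (\<lambda>p. \<beta> (inv \<sigma> p)) K"
    have "(\<Sum>g\<in>InjE K N. F \<pi> g) = (\<Sum>g\<in>InjE K N. F \<pi> (?h g))"
      using sum.reindex_bij_betw[OF bij_InjE_perm[OF pi'[unfolded N_def], of k], of "F \<pi>"]
      by (simp add: K_def N_def)
    also have "\<dots> = (\<Sum>z\<in>S \<times> Q k n. F \<pi> (?h (?f z)))"
      using sum.reindex_bij_betw[OF bij_Sk_Q[of k n], of "\<lambda>g. F \<pi> (?h g)"]
      by (simp add: K_def N_def S_def)
    also have "\<dots> = (\<Sum>\<sigma>\<in>S. \<Sum>\<beta>\<in>Q k n. F \<pi> (?h (?f (\<sigma>, \<beta>))))"
      unfolding sum.cartesian_product by (rule sum.cong[OF refl]) clarsimp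
    also have "\<dots> = (\<Sum>\<sigma>\<in>S. \<Sum>\<beta>\<in>Q k n. T \<pi> \<sigma> \<beta>)"
    proof (intro sum.cong refl)
      fix \<sigma> \<beta> assume s: "\<sigma> \<in> S" and b: "\<beta> \<in> Q k n"
      have s': "\<sigma> permutes K" using s by (simp add: S_def)
      have isg: "inv \<sigma> permutes K" using permutes_inv[OF s'] .
      have gp: "?h (?f (\<sigma>, \<beta>)) p = inv \<pi> (\<beta> (inv \<sigma> p))" if "p \<in> K" for p
        using that by simp
      have img: "?h (?f (\<sigma>, \<beta>)) ` K = inv \<pi> ` \<beta> ` K"
      proof -
        have "?h (?f (\<sigma>, \<beta>)) ` K = (\<lambda>p. inv \<pi> (\<beta> (inv \<sigma> p))) ` K"
          using gp by (rule image_cong[OF refl])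
        also have "\<dots> = inv \<pi> ` \<beta> ` inv \<sigma> ` K" by (simp only: image_image)
        also have "\<dots> = inv \<pi> ` \<beta> ` K" by (simp only: permutes_image[OF isg])
        finally show ?thesis .
      qed
      have "(\<Prod>p\<in>K. Xs p (?h (?f (\<sigma>, \<beta>)) p) (\<pi> (?h (?f (\<sigma>, \<beta>)) p)))
           = (\<Prod>p\<in>K. Xs p (inv \<pi> (\<beta> (inv \<sigma> p))) (\<beta> (inv \<sigma> p)))"
        using gp permutes_inverses(1)[OF pi'] by (intro prod.cong refl) simp
      also have "\<dots> = (\<Prod>b\<in>K. Xs (\<sigma> b) (inv \<pi> (\<beta> b)) (\<beta> b))"
      proof -
        have "(\<Prod>b\<in>K. Xs (\<sigma> b) (inv \<pi> (\<beta> b)) (\<beta> b))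
            = (\<Prod>b\<in>K. (\<lambda>p. Xs p (inv \<pi> (\<beta> (inv \<sigma> p))) (\<beta> (inv \<sigma> p))) (\<sigma> b))"
          by (simp only: permutes_inverses(2)[OF s'])
        also have "\<dots> = (\<Prod>p\<in>K. Xs p (inv \<pi> (\<beta> (inv \<sigma> p))) (\<beta> (inv \<sigma> p)))"
          by (rule prod.reindex_bij_betw[OF permutes_imp_bij[OF s']])
        finally show ?thesis by simp
      qed
      finally show "F \<pi> (?h (?f (\<sigma>, \<beta>))) = T \<pi> \<sigma> \<beta>"
        unfolding F_def T_def img by simp
    qed
    finally show ?thesis .
  qed
  let ?M = "\<lambda>\<sigma> \<alpha> \<beta>. dirsum_ab n k (submat k (X_sigma_beta k Xs \<sigma> \<beta>) \<alpha> \<beta>) \<alpha> \<beta> (compl_submat n k A \<alpha> \<beta>)"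
  define C where "C \<pi> \<sigma> \<alpha> \<beta> = (if \<pi> ` \<alpha> ` K = \<beta> ` K
        then (\<Prod>b\<in>K. Xs (\<sigma> b) (inv \<pi> (\<beta> b)) (\<beta> b)) * (\<Prod>i\<in>N - \<alpha> ` K. A i (\<pi> i)) else 0)"
    for \<pi> \<sigma> \<alpha> \<beta> :: "nat \<Rightarrow> nat"
  have dM: "d_chi n chi (?M \<sigma> \<alpha> \<beta>) = (\<Sum>\<pi>\<in>R. chi \<pi> * C \<pi> \<sigma> \<alpha> \<beta>)" if a: "\<alpha> \<in> Q k n" and b: "\<beta> \<in> Q k n" for \<sigma> \<alpha> \<beta>
    unfolding d_chi_def
  proof (rule sum.cong)
    show "{\<sigma>. \<sigma> permutes {1..n}} = R" by (simp add: R_def N_def)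
    fix \<pi> assume "\<pi> \<in> R"
    then have pi: "\<pi> permutes {1..n}" by (simp add: R_def N_def)
    show "chi \<pi> * (\<Prod>i = 1..n. ?M \<sigma> \<alpha> \<beta> i (\<pi> i)) = chi \<pi> * C \<pi> \<sigma> \<alpha> \<beta>"
      using prod_M[OF a b kn pi, of Xs \<sigma> A] by (simp add: C_def K_def N_def)
  qed
  have inner: "(\<Sum>\<alpha>\<in>Q k n. C \<pi> \<sigma> \<alpha> \<beta>) = T \<pi> \<sigma> \<beta>" if pi: "\<pi> \<in> R" and b: "\<beta> \<in> Q k n" for \<pi> \<sigma> \<beta>
  proof -
    have pi': "\<pi> permutes N" using pi by (simp add: R_def)
    have bN: "\<beta> ` K \<subseteq> N" using Q_img[OF b] by (simp add: K_def N_def)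
    have sub: "inv \<pi> ` \<beta> ` K \<subseteq> N"
      using bN permutes_in_image[OF permutes_inv[OF pi']] by auto
    have crd: "card (inv \<pi> ` \<beta> ` K) = k"
      using card_image[OF permutes_inj_on[OF permutes_inv[OF pi']]] Q_card[OF b] by (simp add: K_def)
    obtain \<alpha>0 where a0: "\<alpha>0 \<in> Q k n" "\<alpha>0 ` K = inv \<pi> ` \<beta> ` K"
      using Q_exists[OF sub[unfolded N_def] crd] by (auto simp: K_def)
    have iff: "(\<pi> ` \<alpha> ` K = \<beta> ` K) \<longleftrightarrow> \<alpha> = \<alpha>0" if a: "\<alpha> \<in> Q k n" for \<alpha>
    proof
      assume h: "\<pi> ` \<alpha> ` K = \<beta> ` K"
      have "\<alpha> ` K = inv \<pi> ` \<pi> ` \<alpha> ` K" by (simp add: image_image permutes_inverses(2)[OF pi'])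
      also have "\<dots> = \<alpha>0 ` K" using h a0(2) by simp
      finally show "\<alpha> = \<alpha>0" using Q_unique[OF a a0(1)] by (simp add: K_def)
    next
      assume "\<alpha> = \<alpha>0"
      then have "\<pi> ` \<alpha> ` K = \<pi> ` inv \<pi> ` \<beta> ` K" using a0(2) by simp
      also have "\<dots> = \<beta> ` K" by (simp add: image_image permutes_inverses(1)[OF pi'])
      finally show "\<pi> ` \<alpha> ` K = \<beta> ` K" .
    qed
    have "(\<Sum>\<alpha>\<in>Q k n. C \<pi> \<sigma> \<alpha> \<beta>) = (\<Sum>\<alpha>\<in>Q k n. if \<alpha> = \<alpha>0 then
          (\<Prod>b\<in>K. Xs (\<sigma> b) (inv \<pi> (\<beta> b)) (\<beta> b)) * (\<Prod>i\<in>N - \<alpha> ` K. A i (\<pi> i)) else 0)"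
      using iff by (intro sum.cong refl) (simp add: C_def)
    also have "\<dots> = (\<Prod>b\<in>K. Xs (\<sigma> b) (inv \<pi> (\<beta> b)) (\<beta> b)) * (\<Prod>i\<in>N - \<alpha>0 ` K. A i (\<pi> i))"
      using a0(1) by (subst sum.delta[OF finite_Q]) simp
    also have "\<dots> = T \<pi> \<sigma> \<beta>" unfolding T_def a0(2) ..
    finally show ?thesis .
  qed
  have "(\<Sum>\<sigma>\<in>S. \<Sum>\<alpha>\<in>Q k n. \<Sum>\<beta>\<in>Q k n. d_chi n chi (?M \<sigma> \<alpha> \<beta>))
      = (\<Sum>\<sigma>\<in>S. \<Sum>\<alpha>\<in>Q k n. \<Sum>\<beta>\<in>Q k n. \<Sum>\<pi>\<in>R. chi \<pi> * C \<pi> \<sigma> \<alpha> \<beta>)"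
    using dM by (intro sum.cong refl) simp
  also have "\<dots> = (\<Sum>\<sigma>\<in>S. \<Sum>\<beta>\<in>Q k n. \<Sum>\<alpha>\<in>Q k n. \<Sum>\<pi>\<in>R. chi \<pi> * C \<pi> \<sigma> \<alpha> \<beta>)"
    by (rule sum.cong[OF refl]) (rule sum.swap)
  also have "\<dots> = (\<Sum>\<sigma>\<in>S. \<Sum>\<beta>\<in>Q k n. \<Sum>\<pi>\<in>R. \<Sum>\<alpha>\<in>Q k n. chi \<pi> * C \<pi> \<sigma> \<alpha> \<beta>)"
    by (rule sum.cong[OF refl], rule sum.cong[OF refl], rule sum.swap)
  also have "\<dots> = (\<Sum>\<sigma>\<in>S. \<Sum>\<beta>\<in>Q k n. \<Sum>\<pi>\<in>R. chi \<pi> * T \<pi> \<sigma> \<beta>)"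
    by (rule sum.cong[OF refl])+ (simp add: sum_distrib_left[symmetric] inner)
  also have "\<dots> = (\<Sum>\<sigma>\<in>S. \<Sum>\<pi>\<in>R. \<Sum>\<beta>\<in>Q k n. chi \<pi> * T \<pi> \<sigma> \<beta>)"
    by (rule sum.cong[OF refl]) (rule sum.swap)
  also have "\<dots> = (\<Sum>\<pi>\<in>R. \<Sum>\<sigma>\<in>S. \<Sum>\<beta>\<in>Q k n. chi \<pi> * T \<pi> \<sigma> \<beta>)"
    by (rule sum.swap)
  also have "\<dots> = (\<Sum>\<pi>\<in>R. chi \<pi> * (\<Sum>g\<in>InjE K N. F \<pi> g))"
    by (rule sum.cong[OF refl]) (simp add: L2 sum_distrib_left)
  also have "\<dots> = Dk_d_chi n chi k A Xs" using L1 by simp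
  finally show ?thesis by (simp add: S_def K_def)
qed

lemma part2:
  fixes n k :: nat and chi :: "(nat \<Rightarrow> nat) \<Rightarrow> complex" and A X :: cmat
  assumes kn: "k \<le> n"
  shows "Dk_d_chi n chi k A (\<lambda>_. X) =
           fact k * (\<Sum>\<alpha>\<in>Q k n. \<Sum>\<beta>\<in>Q k n.
              d_chi n chi (dirsum_ab n k (submat k X \<alpha> \<beta>) \<alpha> \<beta> (compl_submat n k A \<alpha> \<beta>)))"
proof -
  have sm: "submat k (X_sigma_beta k (\<lambda>_. X) \<sigma> \<beta>) \<alpha> \<beta> = submat k X \<alpha> \<beta>" for \<sigma> \<alpha> \<beta>
    by (auto simp: fun_eq_iff submat_def X_sigma_beta_def)
  have "Dk_d_chi n chi k A (\<lambda>_. X) = (\<Sum>\<sigma>\<in>{\<sigma>. \<sigma> permutes {1..k}}. \<Sum>\<alpha>\<in>Q k n. \<Sum>\<beta>\<in>Q k n.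
              d_chi n chi (dirsum_ab n k (submat k X \<alpha> \<beta>) \<alpha> \<beta> (compl_submat n k A \<alpha> \<beta>)))"
    unfolding part1[OF kn] sm ..
  also have "\<dots> = of_nat (card {\<sigma>. \<sigma> permutes {1..k}}) * (\<Sum>\<alpha>\<in>Q k n. \<Sum>\<beta>\<in>Q k n.
              d_chi n chi (dirsum_ab n k (submat k X \<alpha> \<beta>) \<alpha> \<beta> (compl_submat n k A \<alpha> \<beta>)))"
    by (rule sum_constant)
  also have "card {\<sigma>. \<sigma> permutes {1..k}} = fact k"
    by (rule card_permutations) simp_all
  finally show ?thesis by simp
qed

theorem mainTheorem6:
  fixes n k :: nat and chi :: "(nat \<Rightarrow> nat) \<Rightarrow> complex"
    and A X :: cmat and Xs :: "nat \<Rightarrow> cmat"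
  assumes "n \<ge> 1" and "irreducible_character n chi" and "1 \<le> k" and "k \<le> n"
  shows "Dk_d_chi n chi k A Xs =
           (\<Sum>\<sigma>\<in>{\<sigma>. \<sigma> permutes {1..k}}. \<Sum>\<alpha>\<in>Q k n. \<Sum>\<beta>\<in>Q k n.
              d_chi n chi (dirsum_ab n k (submat k (X_sigma_beta k Xs \<sigma> \<beta>) \<alpha> \<beta>) \<alpha> \<beta>
                                 (compl_submat n k A \<alpha> \<beta>)))
       \<and> Dk_d_chi n chi k A (\<lambda>_. X) =
           fact k * (\<Sum>\<alpha>\<in>Q k n. \<Sum>\<beta>\<in>Q k n.
              d_chi n chi (dirsum_ab n k (submat k X \<alpha> \<beta>) \<alpha> \<beta> (compl_submat n k A \<alpha> \<beta>)))"
  using part1[OF assms(4)] part2[OF assms(4)] by blast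


end
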